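(* For every integer $N\ge 2$, every $\delta<0$ and every $\theta\in\mathbb{R}$, $$\lim_{\beta\to+\infty}E_r(\theta)=\begin{cases}\frac{N^2\theta}{2}\Big(\frac{1}{N-1}+H_N\Big) & \theta<-\delta,\\ N^2\theta H_N & \theta=-\delta,\\ \frac{N^2\theta}{2}\big(1+H_N\big) & \theta>-\delta,\end{cases}\qquad \lim_{\beta\to+\infty}E_p(\theta)=\begin{cases}\frac{N^2\theta}{2}\big(1+H_N\big) & \theta<-\delta,\\ N^2\theta H_N & \theta=-\delta,\\ \frac{N^2\theta}{2}\Big(H_N+\frac{1}{N-1}\Big) & \theta>-\delta.\end{cases}$$
   Context: Fix an integer $N\ge 2$ and $\delta<0$. For $\beta>0$ and $\theta\in\mathbb{R}$ put $x=\beta(\theta+\delta)$; for $1\le i\le N-1$ define $u_{i,i+1}=\frac{i(N-i)}{N^2}(1+e^{-x})^{-1}$, $u_{i,i-1}=\frac{i(N-i)}{N^2}(1+e^{x})^{-1}$, $u_{i,i}=1-u_{i,i+1}-u_{i,i-1}$, $u_{i,j}=0$ for $|i-j|\ge2$; let $U=(u_{ij})_{i,j=1}^{N-1}$, $(n_{ij})_{i,j=1}^{N-1}=(I-U)^{-1}$, and $E_r(\theta)=\frac{\theta}{2}\sum_{i=1}^{N-1}(n_{1i}+n_{N-1,i})\,i$, $E_p(\theta)=\frac{\theta}{2}\sum_{i=1}^{N-1}(n_{1i}+n_{N-1,i})(N-i)$ (these depend on $\beta$). Here $H_N=\sum_{j=1}^{N-1}\frac1j$. *)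

theory Defs
  imports Complex_Main "Jordan_Normal_Form.Gauss_Jordan_Elimination"
begin

(* Transition probabilities u_{ij}, indices i,j in {1..N-1}; x = beta*(theta+delta). *)
definition u_entry :: "nat \<Rightarrow> real \<Rightarrow> nat \<Rightarrow> nat \<Rightarrow> real" where
  "u_entry N x i j =
     (let c = real (i * (N - i)) / (real N)^2;
          up = c / (1 + exp (- x));
          down = c / (1 + exp x)
      in if j = i + 1 then up
         else if j + 1 = i then down
         else if j = i then 1 - up - down
         else 0)"

(* U as an (N-1)x(N-1) matrix; 0-based entry (a,b) stores u_{a+1,b+1} *)
definition U_mat :: "nat \<Rightarrow> real \<Rightarrow> real \<Rightarrow> real \<Rightarrow> real mat" where
  "U_mat N delta beta theta =
     mat (N - 1) (N - 1) (\<lambda>(a, b). u_entry N (beta * (theta + delta)) (a + 1) (b + 1))"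

(* fundamental matrix (I - U)^{-1}; 0-based entry (a,b) stores n_{a+1,b+1} *)
definition fund_mat :: "nat \<Rightarrow> real \<Rightarrow> real \<Rightarrow> real \<Rightarrow> real mat" where
  "fund_mat N delta beta theta =
     the (mat_inverse (1\<^sub>m (N - 1) - U_mat N delta beta theta))"

(* n_{ij} for 1 <= i,j <= N-1 *)
definition nn :: "nat \<Rightarrow> real \<Rightarrow> real \<Rightarrow> real \<Rightarrow> nat \<Rightarrow> nat \<Rightarrow> real" where
  "nn N delta beta theta i j = fund_mat N delta beta theta $$ (i - 1, j - 1)"

definition E_r :: "nat \<Rightarrow> real \<Rightarrow> real \<Rightarrow> real \<Rightarrow> real" where
  "E_r N delta beta theta = theta / 2 *
     (\<Sum>i = 1..N - 1. (nn N delta beta theta 1 i + nn N delta beta theta (N - 1) i) * real i)"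

definition E_p :: "nat \<Rightarrow> real \<Rightarrow> real \<Rightarrow> real \<Rightarrow> real" where
  "E_p N delta beta theta = theta / 2 *
     (\<Sum>i = 1..N - 1. (nn N delta beta theta 1 i + nn N delta beta theta (N - 1) i) * real (N - i))"

definition harm :: "nat \<Rightarrow> real" where
  "harm N = (\<Sum>j = 1..N - 1. 1 / real j)"

end

theory Submission
  imports Defs "Jordan_Normal_Form.Determinant" "HOL-Real_Asymp.Real_Asymp"
begin


lemma det_tendsto:
  fixes A :: "'b \<Rightarrow> real mat"
  assumes A: "\<And>t. A t \<in> carrier_mat n n" and L: "L \<in> carrier_mat n n"
  and lim: "\<And>i j. i<n \<Longrightarrow> j<n \<Longrightarrow> ((\<lambda>t. A t $$ (i,j)) \<longlongrightarrow> L $$ (i,j)) F"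
  shows "((\<lambda>t. det (A t)) \<longlongrightarrow> det L) F"
proof -
  have "((\<lambda>t. \<Sum>p\<in>{p. p permutes {0..<n}}. signof p * (\<Prod>i=0..<n. A t $$ (i, p i)))
     \<longlongrightarrow> (\<Sum>p\<in>{p. p permutes {0..<n}}. signof p * (\<Prod>i=0..<n. L $$ (i, p i)))) F"
  proof (intro tendsto_sum tendsto_mult tendsto_const tendsto_prod)
    fix p i assume p: "p \<in> {p. p permutes {0..<n}}" and i: "i \<in> {0..<n}"
    then have "p i < n" by (simp add: permutes_in_image)
    then show "((\<lambda>t. A t $$ (i, p i)) \<longlongrightarrow> L $$ (i, p i)) F" using lim i by auto
  qed
  then show ?thesis by (simp add: det_def'[OF A] det_def'[OF L])
qed

lemma cofactor_tendsto:
  fixes A :: "'b \<Rightarrow> real mat"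
  assumes A: "\<And>t. A t \<in> carrier_mat n n" and L: "L \<in> carrier_mat n n"
  and lim: "\<And>i j. i<n \<Longrightarrow> j<n \<Longrightarrow> ((\<lambda>t. A t $$ (i,j)) \<longlongrightarrow> L $$ (i,j)) F"
  and ij: "i < n" "j < n"
  shows "((\<lambda>t. cofactor (A t) i j) \<longlongrightarrow> cofactor L i j) F"
proof -
  have "((\<lambda>t. det (mat_delete (A t) i j)) \<longlongrightarrow> det (mat_delete L i j)) F"
  proof (rule det_tendsto)
    show "\<And>t. mat_delete (A t) i j \<in> carrier_mat (n-1) (n-1)" using A by (rule mat_delete_carrier)
    show "mat_delete L i j \<in> carrier_mat (n-1) (n-1)" using L by (rule mat_delete_carrier)
    fix a b assume ab: "a < n - 1" "b < n - 1"
    have "((\<lambda>t. A t $$ (if a < i then a else Suc a, if b < j then b else Suc b)) \<longlongrightarrow>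
          L $$ (if a < i then a else Suc a, if b < j then b else Suc b)) F"
      using ab by (intro lim) auto
    moreover have "\<And>t. mat_delete (A t) i j $$ (a, b) = A t $$ (if a < i then a else Suc a, if b < j then b else Suc b)"
    proof -
      fix t have "dim_row (A t) = n" "dim_col (A t) = n" using A[of t] by auto
      then show "mat_delete (A t) i j $$ (a, b) = A t $$ (if a < i then a else Suc a, if b < j then b else Suc b)"
        using ab by (simp add: mat_delete_def)
    qed
    moreover have "mat_delete L i j $$ (a, b) = L $$ (if a < i then a else Suc a, if b < j then b else Suc b)"
      using ab L by (simp add: mat_delete_def)
    ultimately show "((\<lambda>t. mat_delete (A t) i j $$ (a, b)) \<longlongrightarrow> mat_delete L i j $$ (a, b)) F"
      by simp
  qed
  then show ?thesis unfolding cofactor_def by (intro tendsto_intros)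
qed

lemma inv_limit:
  fixes A :: "'b \<Rightarrow> real mat"
  assumes A: "\<And>t. A t \<in> carrier_mat n n" and L: "L \<in> carrier_mat n n"
  and B: "Binv \<in> carrier_mat n n" and LB: "L * Binv = 1\<^sub>m n"
  and lim: "\<And>i j. i<n \<Longrightarrow> j<n \<Longrightarrow> ((\<lambda>t. A t $$ (i,j)) \<longlongrightarrow> L $$ (i,j)) F"
  and ij: "i < n" "j < n"
  shows "((\<lambda>t. the (mat_inverse (A t)) $$ (i,j)) \<longlongrightarrow> Binv $$ (i,j)) F"
proof -
  have dL: "det L * det Binv = 1" using det_mult[OF L B] LB by simp
  hence dL0: "det L \<noteq> 0" by auto
  have adjL: "adj_mat L = det L \<cdot>\<^sub>m Binv"
  proof -
    have "adj_mat L = adj_mat L * (L * Binv)" using LB adj_mat(1)[OF L] by simp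
    also have "\<dots> = (adj_mat L * L) * Binv" using adj_mat(1)[OF L] L B by (simp add: assoc_mult_mat)
    also have "\<dots> = det L \<cdot>\<^sub>m Binv" using adj_mat(3)[OF L] B by (simp add: mult_smult_assoc_mat[OF one_carrier_mat B])
    finally show ?thesis .
  qed
  have detlim: "((\<lambda>t. det (A t)) \<longlongrightarrow> det L) F" by (rule det_tendsto[OF A L lim])
  have ev: "\<forall>\<^sub>F t in F. det (A t) \<noteq> 0" using tendsto_imp_eventually_ne[OF detlim dL0] .
  have eq: "\<forall>\<^sub>F t in F. the (mat_inverse (A t)) $$ (i,j) = cofactor (A t) j i / det (A t)"
  proof (rule eventually_mono[OF ev])
    fix t assume d: "det (A t) \<noteq> 0"
    have U: "A t \<in> Units (ring_mat TYPE(real) n undefined)" by (rule det_non_zero_imp_unit[OF A d])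
    obtain C where C: "mat_inverse (A t) = Some C"
      using mat_inverse(1)[OF A[of t], of undefined] U by (cases "mat_inverse (A t)") auto
    from mat_inverse(2)[OF A[of t] C] have AC: "A t * C = 1\<^sub>m n" "C * A t = 1\<^sub>m n" "C \<in> carrier_mat n n" by auto
    have "adj_mat (A t) = C * (A t * adj_mat (A t))" using AC adj_mat(1)[OF A[of t]] A[of t] by (simp add: assoc_mult_mat[symmetric, OF AC(3) A[of t] adj_mat(1)[OF A[of t]]] left_mult_one_mat)
    also have "\<dots> = det (A t) \<cdot>\<^sub>m C" using adj_mat(2)[OF A[of t]] AC by (simp add: mult_smult_distrib[OF AC(3) one_carrier_mat] right_mult_one_mat)
    finally have "adj_mat (A t) $$ (i,j) = det (A t) * C $$ (i,j)" using ij AC by simp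
    moreover have "adj_mat (A t) $$ (i,j) = cofactor (A t) j i" using ij A[of t] by (simp add: adj_mat_def)
    ultimately show "the (mat_inverse (A t)) $$ (i,j) = cofactor (A t) j i / det (A t)"
      using C d by (simp add: field_simps)
  qed
  have "((\<lambda>t. cofactor (A t) j i / det (A t)) \<longlongrightarrow> cofactor L j i / det L) F"
    by (intro tendsto_divide detlim cofactor_tendsto[OF A L lim] dL0 ij)
  moreover have "cofactor L j i / det L = Binv $$ (i,j)"
  proof -
    have "adj_mat L $$ (i,j) = cofactor L j i" using ij L by (simp add: adj_mat_def)
    moreover have "adj_mat L $$ (i,j) = det L * Binv $$ (i,j)" using adjL ij B by simp
    ultimately show ?thesis using dL0 by (simp add: field_simps)
  qed
  ultimately show ?thesis using tendsto_cong[OF eq] by simp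
qed



definition ug :: "nat \<Rightarrow> real \<Rightarrow> nat \<Rightarrow> nat \<Rightarrow> real" where
  "ug N p i j = (let c = real (i * (N - i)) / (real N)^2
      in if j = i + 1 then c * p
         else if j + 1 = i then c * (1 - p)
         else if j = i then 1 - c * p - c * (1 - p)
         else 0)"

definition Amat :: "nat \<Rightarrow> real \<Rightarrow> real mat" where
  "Amat N p = 1\<^sub>m (N - 1) - mat (N - 1) (N - 1) (\<lambda>(a, b). ug N p (a + 1) (b + 1))"

definition Bmat :: "nat \<Rightarrow> (nat \<Rightarrow> nat \<Rightarrow> real) \<Rightarrow> real mat" where
  "Bmat N f = mat (N - 1) (N - 1) (\<lambda>(a, b). f (a + 1) (b + 1))"

definition cc :: "nat \<Rightarrow> nat \<Rightarrow> real" where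
  "cc N i = real i * (real N - real i) / (real N)^2"

lemma u_entry_ug: "u_entry N x i j = ug N (1 / (1 + exp (- x))) i j"
proof -
  have "1 / (1 + exp x) = 1 - 1 / (1 + exp (- x))"
  proof -
    have "1 + exp x \<noteq> 0" by (smt (verit) exp_gt_zero)
    then show ?thesis by (simp add: exp_minus field_simps)
  qed
  then show ?thesis unfolding u_entry_def ug_def Let_def
    by (simp add: divide_inverse)
qed

lemma fund_Amat: "fund_mat N delta beta theta = the (mat_inverse (Amat N (1 / (1 + exp (- (beta * (theta + delta)))))))"
proof -
  have "1\<^sub>m (N - 1) - U_mat N delta beta theta = Amat N (1 / (1 + exp (- (beta * (theta + delta)))))"
    unfolding U_mat_def Amat_def by (simp add: u_entry_ug case_prod_beta)
  then show ?thesis unfolding fund_mat_def by simp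
qed

lemma Amat_carrier: "Amat N p \<in> carrier_mat (N - 1) (N - 1)" unfolding Amat_def carrier_mat_def by simp
lemma Bmat_carrier: "Bmat N f \<in> carrier_mat (N - 1) (N - 1)" unfolding Bmat_def by simp

lemma Amat_tendsto:
  assumes "(g \<longlongrightarrow> p0) F" "a < N - 1" "b < N - 1"
  shows "((\<lambda>t. Amat N (g t) $$ (a, b)) \<longlongrightarrow> Amat N p0 $$ (a, b)) F"
  using assms unfolding Amat_def ug_def Let_def
  by (auto intro!: tendsto_intros)

lemma pf_lim_pos: fixes k :: real assumes "k > 0" shows "((\<lambda>b. 1 / (1 + exp (- (b * k)))) \<longlongrightarrow> 1) at_top"
proof -
  have "filterlim (\<lambda>b. k * b) at_top at_top"
    by (rule filterlim_tendsto_pos_mult_at_top[of "\<lambda>_. k"]) (auto intro: filterlim_ident simp: assms)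
  then have "filterlim (\<lambda>b. - (b * k)) at_bot at_top"
    by (simp add: filterlim_uminus_at_top mult.commute)
  then have "((\<lambda>b. exp (- (b * k))) \<longlongrightarrow> 0) at_top"
    by (rule filterlim_compose[OF exp_at_bot])
  then have "((\<lambda>b. 1 / (1 + exp (- (b * k)))) \<longlongrightarrow> 1 / (1 + 0)) at_top"
    by (intro tendsto_intros) auto
  then show ?thesis by simp
qed

lemma pf_lim_neg: fixes k :: real assumes "k < 0" shows "((\<lambda>b. 1 / (1 + exp (- (b * k)))) \<longlongrightarrow> 0) at_top"
proof -
  have "filterlim (\<lambda>b. (-k) * b) at_top at_top"
    by (rule filterlim_tendsto_pos_mult_at_top[of "\<lambda>_. -k"]) (auto intro: filterlim_ident simp: assms)
  then have "filterlim (\<lambda>b. - (b * k)) at_top at_top"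
    by (simp add: mult.commute)
  then have "filterlim (\<lambda>b. exp (- (b * k))) at_top at_top"
    by (rule filterlim_compose[OF exp_at_top])
  then have "filterlim (\<lambda>b. 1 + exp (- (b * k))) at_top at_top"
    by (rule filterlim_tendsto_add_at_top[OF tendsto_const])
  then show ?thesis
    by (rule tendsto_divide_0[OF tendsto_const filterlim_at_top_imp_at_infinity])
qed

lemma tri_sum:
  fixes M :: "nat \<Rightarrow> real"
  assumes a: "a < n" and z: "\<And>k. k<n \<Longrightarrow> k \<noteq> a \<Longrightarrow> k \<noteq> a+1 \<Longrightarrow> k+1 \<noteq> a \<Longrightarrow> M k = 0"
  shows "(\<Sum>k\<in>{0..<n}. M k) = M a + (if a+1<n then M (a+1) else 0) + (if 0<a then M (a-1) else 0)"
proof -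
  let ?S = "{k. k<n \<and> (k = a \<or> k = a+1 \<or> k+1 = a)}"
  have "(\<Sum>k\<in>{0..<n}. M k) = (\<Sum>k\<in>?S. M k)"
    by (rule sum.mono_neutral_right) (use z in auto)
  also have "\<dots> = M a + (if a+1<n then M (a+1) else 0) + (if 0<a then M (a-1) else 0)"
  proof (cases "a+1<n"; cases "0<a")
    assume "a+1<n" "0<a"
    then have "?S = {a, a+1, a-1}" using a by auto
    then show ?thesis using \<open>a+1<n\<close> \<open>0<a\<close> by simp
  next
    assume "a+1<n" "\<not> 0<a"
    then have "?S = {a, a+1}" using a by auto
    then show ?thesis using \<open>a+1<n\<close> \<open>\<not>0<a\<close> by simp
  next
    assume "\<not> a+1<n" "0<a"
    then have "?S = {a, a-1}" using a by auto
    then show ?thesis using \<open>\<not>a+1<n\<close> \<open>0<a\<close> by simp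
  next
    assume "\<not> a+1<n" "\<not> 0<a"
    then have "?S = {a}" using a by auto
    then show ?thesis using \<open>\<not>a+1<n\<close> \<open>\<not>0<a\<close> by simp
  qed
  finally show ?thesis .
qed

lemma c_eq: "i \<le> N \<Longrightarrow> real (i * (N - i)) / (real N)^2 = cc N i"
  unfolding cc_def by (simp add: of_nat_diff)

lemma ug_diag: assumes "i \<le> N" shows "ug N p i i = 1 - cc N i"
proof -
  have "ug N p i i = 1 - cc N i * p - cc N i * (1 - p)"
    unfolding ug_def Let_def c_eq[OF assms] by simp
  then show ?thesis by (simp add: algebra_simps)
qed

lemma ug_up: assumes "i \<le> N" shows "ug N p i (i+1) = cc N i * p"
  unfolding ug_def Let_def c_eq[OF assms] by simp

lemma ug_down: assumes "j + 1 \<le> N" shows "ug N p (j+1) j = cc N (j+1) * (1 - p)"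
  unfolding ug_def Let_def c_eq[OF assms] by simp

lemma Amat_Bmat:
  assumes N: "N \<ge> 2"
  and H: "\<And>i j. 1 \<le> i \<Longrightarrow> i \<le> N-1 \<Longrightarrow> 1 \<le> j \<Longrightarrow> j \<le> N-1 \<Longrightarrow>
      cc N i * (f i j - p * f (i+1) j - (1-p) * f (i-1) j) = (if i = j then 1 else 0)"
  and top: "\<And>j. 1 \<le> j \<Longrightarrow> j \<le> N-1 \<Longrightarrow> p * f N j = 0" and bot: "\<And>j. 1 \<le> j \<Longrightarrow> j \<le> N-1 \<Longrightarrow> (1-p) * f 0 j = 0"
  shows "Amat N p * Bmat N f = 1\<^sub>m (N-1)"
proof (rule eq_matI)
  show "dim_row (Amat N p * Bmat N f) = dim_row (1\<^sub>m (N - 1))" "dim_col (Amat N p * Bmat N f) = dim_col (1\<^sub>m (N - 1))"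
    using Amat_carrier[of N p] Bmat_carrier[of N f] by auto
  fix a b assume "a < dim_row (1\<^sub>m (N - 1))" "b < dim_col (1\<^sub>m (N - 1))"
  then have a: "a < N - 1" and b: "b < N - 1" by auto
  let ?c = "cc N (a+1)"
  have ent: "\<And>k. k < N - 1 \<Longrightarrow> Amat N p $$ (a,k) = (if a = k then 1 else 0) - ug N p (a+1) (k+1)"
    using a by (simp add: Amat_def)
  have "(Amat N p * Bmat N f) $$ (a,b) = (\<Sum>k\<in>{0..<N-1}. Amat N p $$ (a,k) * f (k+1) (b+1))"
    using a b Amat_carrier[of N p] Bmat_carrier[of N f]
    by (simp add: scalar_prod_def Bmat_def row_def col_def)
  also have "\<dots> = Amat N p $$ (a,a) * f (a+1) (b+1)
      + (if a+1 < N-1 then Amat N p $$ (a,a+1) * f (a+1+1) (b+1) else 0)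
      + (if 0 < a then Amat N p $$ (a,a-1) * f (a-1+1) (b+1) else 0)"
    by (rule tri_sum[OF a]) (simp add: ent ug_def Let_def)
  also have "\<dots> = ?c * f (a+1) (b+1)
      + (if a+1 < N-1 then - ?c * p * f (a+2) (b+1) else 0)
      + (if 0 < a then - ?c * (1-p) * f a (b+1) else 0)"
  proof -
    have e0: "Amat N p $$ (a,a) = ?c" using a ent[of a] ug_diag[of "a+1" N p] by simp
    have e1: "a+1 < N-1 \<Longrightarrow> Amat N p $$ (a,a+1) = - ?c * p" using ent[of "a+1"] ug_up[of "a+1" N p] by simp
    have e2: "0 < a \<Longrightarrow> Amat N p $$ (a,a-1) = - ?c * (1-p)" using a ent[of "a-1"] ug_down[of a N p] by simp
    have t1: "(if a+1 < N-1 then Amat N p $$ (a,a+1) * f (a+1+1) (b+1) else 0)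
       = (if a+1 < N-1 then - ?c * p * f (a+2) (b+1) else 0)" using e1 by (simp add: numeral_2_eq_2)
    have t2: "(if 0 < a then Amat N p $$ (a,a-1) * f (a-1+1) (b+1) else 0)
       = (if 0 < a then - ?c * (1-p) * f a (b+1) else 0)" using e2 by simp
    show ?thesis unfolding t1 t2 e0 ..
  qed
  also have "\<dots> = ?c * (f (a+1) (b+1) - p * f (a+1+1) (b+1) - (1-p) * f (a+1-1) (b+1))"
  proof -
    have t: "\<not> a+1 < N-1 \<Longrightarrow> p * f (a+2) (b+1) = 0" using a b top[of "b+1"]
      by (subgoal_tac "a+2 = N") auto
    have o: "\<not> 0 < a \<Longrightarrow> (1-p) * f a (b+1) = 0" using b bot[of "b+1"] by auto
    show ?thesis using t o by (auto simp: algebra_simps)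
  qed
  also have "\<dots> = (if a+1 = b+1 then 1 else 0)" using a b by (intro H) auto
  also have "\<dots> = 1\<^sub>m (N - 1) $$ (a, b)" using a b by simp
  finally show "(Amat N p * Bmat N f) $$ (a,b) = 1\<^sub>m (N - 1) $$ (a, b)" .
qed

lemma fund_lim:
  assumes p: "((\<lambda>beta. 1 / (1 + exp (- (beta * (theta + delta))))) \<longlongrightarrow> p0) at_top"
  and AB: "Amat N p0 * Bmat N f = 1\<^sub>m (N-1)" and ab: "a < N-1" "b < N-1"
  shows "((\<lambda>beta. fund_mat N delta beta theta $$ (a,b)) \<longlongrightarrow> f (a+1) (b+1)) at_top"
proof -
  have "((\<lambda>beta. the (mat_inverse (Amat N (1 / (1 + exp (- (beta * (theta + delta))))))) $$ (a,b))
     \<longlongrightarrow> Bmat N f $$ (a,b)) at_top"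
    apply (rule inv_limit[where A="\<lambda>beta. Amat N (1 / (1 + exp (- (beta * (theta + delta)))))" and n="N-1"])
    apply (rule Amat_carrier)+
      apply (rule Bmat_carrier)
     apply (rule AB)
    apply (rule Amat_tendsto[OF p], assumption+)
    apply (rule ab)+
    done
  then show ?thesis using ab by (simp add: fund_Amat Bmat_def)
qed

lemma E_lims:
  assumes N: "N \<ge> 2"
  and F: "\<And>a b. a<N-1 \<Longrightarrow> b<N-1 \<Longrightarrow> ((\<lambda>beta. fund_mat N delta beta theta $$ (a,b)) \<longlongrightarrow> f (a+1) (b+1)) at_top"
  shows "((\<lambda>beta. E_r N delta beta theta) \<longlongrightarrow> theta/2 * (\<Sum>i=1..N-1. (f 1 i + f (N-1) i) * real i)) at_top"
    and "((\<lambda>beta. E_p N delta beta theta) \<longlongrightarrow> theta/2 * (\<Sum>i=1..N-1. (f 1 i + f (N-1) i) * real (N - i))) at_top"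
proof -
  have L: "((\<lambda>beta. nn N delta beta theta k i) \<longlongrightarrow> f k i) at_top" if "i \<in> {1..N-1}" "k = 1 \<or> k = N - 1" for k i
  proof -
    have "((\<lambda>beta. fund_mat N delta beta theta $$ (k-1,i-1)) \<longlongrightarrow> f (k-1+1) (i-1+1)) at_top"
      using that N by (intro F) auto
    moreover have "k-1+1 = k" "i-1+1 = i" using that N by auto
    ultimately show ?thesis by (simp add: nn_def)
  qed
  show "((\<lambda>beta. E_r N delta beta theta) \<longlongrightarrow> theta/2 * (\<Sum>i=1..N-1. (f 1 i + f (N-1) i) * real i)) at_top"
    unfolding E_r_def by (intro tendsto_intros L) auto
  show "((\<lambda>beta. E_p N delta beta theta) \<longlongrightarrow> theta/2 * (\<Sum>i=1..N-1. (f 1 i + f (N-1) i) * real (N - i))) at_top"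
    unfolding E_p_def by (intro tendsto_intros L) auto
qed

definition f1 :: "nat \<Rightarrow> nat \<Rightarrow> nat \<Rightarrow> real" where
  "f1 N i j = (if i \<le> j then 1 / cc N j else 0)"
definition f0 :: "nat \<Rightarrow> nat \<Rightarrow> nat \<Rightarrow> real" where
  "f0 N i j = (if j \<le> i then 1 / cc N j else 0)"
definition fh :: "nat \<Rightarrow> nat \<Rightarrow> nat \<Rightarrow> real" where
  "fh N i j = (if i \<le> j then 2 * real i * (real N - real j) / real N
               else 2 * real j * (real N - real i) / real N) / cc N j"

lemma cc_pos: "1 \<le> i \<Longrightarrow> i < N \<Longrightarrow> cc N i > 0"
  unfolding cc_def by (auto intro!: divide_pos_pos mult_pos_pos)

lemma AB1: assumes "N \<ge> 2" shows "Amat N 1 * Bmat N (f1 N) = 1\<^sub>m (N-1)"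
proof (rule Amat_Bmat[OF assms])
  fix i j assume ij: "1 \<le> i" "i \<le> N-1" "1 \<le> j" "j \<le> N-1"
  have "cc N i > 0" using ij cc_pos assms by auto
  then show "cc N i * (f1 N i j - 1 * f1 N (i + 1) j - (1 - 1) * f1 N (i - 1) j) = (if i = j then 1 else 0)"
    unfolding f1_def by auto
next
  fix j :: nat assume "1 \<le> j" "j \<le> N-1"
  then show "1 * f1 N N j = 0" unfolding f1_def by auto
qed simp

lemma AB0: assumes "N \<ge> 2" shows "Amat N 0 * Bmat N (f0 N) = 1\<^sub>m (N-1)"
proof (rule Amat_Bmat[OF assms])
  fix i j assume ij: "1 \<le> i" "i \<le> N-1" "1 \<le> j" "j \<le> N-1"
  have "cc N i > 0" "cc N j > 0" using ij cc_pos assms by auto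
  then show "cc N i * (f0 N i j - 0 * f0 N (i + 1) j - (1 - 0) * f0 N (i - 1) j) = (if i = j then 1 else 0)"
    unfolding f0_def using ij by auto
next
  fix j :: nat assume "1 \<le> j" "j \<le> N-1"
  then show "(1 - 0) * f0 N 0 j = 0" unfolding f0_def by auto
qed simp

lemma ABh: assumes "N \<ge> 2" shows "Amat N (1/2) * Bmat N (fh N) = 1\<^sub>m (N-1)"
proof (rule Amat_Bmat[OF assms])
  fix i j assume ij: "1 \<le> i" "i \<le> N-1" "1 \<le> j" "j \<le> N-1"
  have ci: "cc N i > 0" and cj: "cc N j > 0" using ij cc_pos assms by auto
  have Npos: "real N > 0" using assms by auto
  have im: "real (i - 1) = real i - 1" using ij by (simp add: of_nat_diff)
  consider "i < j" | "i = j" | "i > j" by linarith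
  then show "cc N i * (fh N i j - 1/2 * fh N (i + 1) j - (1 - 1/2) * fh N (i - 1) j) = (if i = j then 1 else 0)"
  proof cases
    case 1
    then have "i + 1 \<le> j" "i - 1 \<le> j" by auto
    then show ?thesis using 1 cj Npos unfolding fh_def im by (simp add: field_simps)
  next
    case 2
    then have "\<not> i + 1 \<le> j" "i - 1 \<le> j" by auto
    then show ?thesis using 2 cj Npos unfolding fh_def im by (simp add: field_simps)
  next
    case 3
    then have "\<not> i + 1 \<le> j" "\<not> i \<le> j" by auto
    show ?thesis
    proof (cases "i - 1 = j")
      case True
      then have ri: "real i = real j + 1" using ij by auto
      have "\<not> i \<le> j" "i - 1 \<le> j" using True 3 by auto
      then show ?thesis using 3 cj Npos True unfolding fh_def im by (simp add: field_simps ri)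
    next
      case False
      then have "\<not> i - 1 \<le> j" using 3 by auto
      then show ?thesis using 3 cj Npos unfolding fh_def im by (simp add: field_simps)
    qed
  qed
next
  fix j :: nat assume "1 \<le> j" "j \<le> N-1"
  then show "1/2 * fh N N j = 0" unfolding fh_def by auto
next
  fix j :: nat assume "1 \<le> j" "j \<le> N-1"
  then show "(1 - 1/2) * fh N 0 j = 0" unfolding fh_def by auto
qed

lemma harm_rev: "(\<Sum>i=1..N-1. 1 / (real N - real i)) = harm N"
  unfolding harm_def
  by (rule sum.reindex_bij_witness[of _ "\<lambda>j. N - j" "\<lambda>j. N - j"]) (auto simp: of_nat_diff)

lemma sum_helper:
  fixes g h :: "nat \<Rightarrow> real"
  assumes g: "\<And>i. 1 \<le> i \<Longrightarrow> i \<le> N-1 \<Longrightarrow> g i = A * h i + (if i = k then B else 0)"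
  and k: "k \<in> {1..N-1}"
  shows "(\<Sum>i=1..N-1. g i) = A * (\<Sum>i=1..N-1. h i) + (B::real)"
proof -
  have "(\<Sum>i=1..N-1. g i) = (\<Sum>i=1..N-1. A * h i + (if i = k then B else 0))"
    by (rule sum.cong) (auto simp: g)
  moreover have "(\<Sum>i=1..N-1. if i = k then B else 0) = B"
  proof -
    have "(\<Sum>i=1..N-1. if i = k then B else 0) = (\<Sum>i\<in>{k}. if i = k then B else 0)"
      by (rule sum.mono_neutral_right) (use k in auto)
    then show ?thesis by simp
  qed
  ultimately show ?thesis by (simp add: sum.distrib sum_distrib_left)
qed

lemma pt:
  assumes N: "N \<ge> 2" and i: "1 \<le> i" "i \<le> N-1"
  shows "(f1 N 1 i + f1 N (N-1) i) * real i = (real N)^2 * (1 / (real N - real i)) + (if i = N-1 then (real N)^2 else 0)"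
    and "(f1 N 1 i + f1 N (N-1) i) * real (N - i) = (real N)^2 * (1 / real i) + (if i = N-1 then (real N)^2 / (real N - 1) else 0)"
    and "(f0 N 1 i + f0 N (N-1) i) * real i = (real N)^2 * (1 / (real N - real i)) + (if i = 1 then (real N)^2 / (real N - 1) else 0)"
    and "(f0 N 1 i + f0 N (N-1) i) * real (N - i) = (real N)^2 * (1 / real i) + (if i = 1 then (real N)^2 else 0)"
    and "(fh N 1 i + fh N (N-1) i) * real i = (2 * (real N)^2) * (1 / (real N - real i)) + (if i = 1 then 0 else 0)"
    and "(fh N 1 i + fh N (N-1) i) * real (N - i) = (2 * (real N)^2) * (1 / real i) + (if i = 1 then 0 else 0)"
proof -
  have Np: "real N > 0" and ip: "real i > 0" and d: "real N - real i > 0" using N i by auto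
  have Nm: "real (N - i) = real N - real i" using i by (simp add: of_nat_diff)
  have N1: "real N - 1 > 0" using N by auto
  have cc: "cc N i = real i * (real N - real i) / (real N)^2" by (simp add: cc_def)
  have cases_top: "i = N - 1 \<Longrightarrow> real i = real N - 1" using N by (simp add: of_nat_diff)
  have cases_bot: "i = 1 \<Longrightarrow> real i = 1" by simp
  have le1: "(i \<le> 1) = (i = 1)" using i by auto
  have leN: "(N - 1 \<le> i) = (N = i + 1)" using i by auto
  have eqN: "(i = N - 1) = (N = i + 1)" using i N by auto
  show "(f1 N 1 i + f1 N (N-1) i) * real i = (real N)^2 * (1 / (real N - real i)) + (if i = N-1 then (real N)^2 else 0)"
    unfolding f1_def cc leN eqN using i Np ip d cases_top by (auto simp: field_simps)
  show "(f1 N 1 i + f1 N (N-1) i) * real (N - i) = (real N)^2 * (1 / real i) + (if i = N-1 then (real N)^2 / (real N - 1) else 0)"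
    unfolding f1_def cc leN eqN Nm using i Np ip d N1 cases_top by (auto simp: field_simps)
  show "(f0 N 1 i + f0 N (N-1) i) * real i = (real N)^2 * (1 / (real N - real i)) + (if i = 1 then (real N)^2 / (real N - 1) else 0)"
  proof (cases "i = 1")
    case True
    have e: "f0 N 1 i = (real N)^2 / (real N - 1)" "f0 N (N-1) i = (real N)^2 / (real N - 1)" "real i = 1"
      using True i by (auto simp: f0_def cc_def)
    show ?thesis unfolding e if_P[OF True] by simp
  next
    case False
    have "f0 N 1 i = 0" "f0 N (N-1) i = 1 / cc N i" using False i by (auto simp: f0_def)
    then show ?thesis unfolding cc using False Np ip d by (simp add: field_simps)
  qed
  show "(f0 N 1 i + f0 N (N-1) i) * real (N - i) = (real N)^2 * (1 / real i) + (if i = 1 then (real N)^2 else 0)"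
  proof (cases "i = 1")
    case True
    have e: "f0 N 1 i = (real N)^2 / (real N - 1)" "f0 N (N-1) i = (real N)^2 / (real N - 1)" "real i = 1"
      using True i by (auto simp: f0_def cc_def)
    have h: "(real N)^2 / (real N - 1) * (real N - 1) = (real N)^2" using N1 by simp
    show ?thesis unfolding e if_P[OF True] Nm using N by (simp add: distrib_right h e(3))
  next
    case False
    have "f0 N 1 i = 0" "f0 N (N-1) i = 1 / cc N i" using False i by (auto simp: f0_def)
    then show ?thesis unfolding cc Nm using False Np ip d by (simp add: field_simps)
  qed
  have ccp: "cc N i > 0" using cc_pos i N by auto
  have fh: "fh N 1 i + fh N (N-1) i = 2 / cc N i"
  proof (cases "N = i + 1")
    case True
    have pp: "cc N i + real i * cc N i > 0" using ccp ip by (simp add: add_pos_pos)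
    then show ?thesis unfolding fh_def leN using i Np ip d N ccp by (auto simp: field_simps)
  next
    case False
    then have "\<not> N - 1 \<le> i" using i leN by auto
    then show ?thesis unfolding fh_def using i Np ip d N ccp by (auto simp: field_simps of_nat_diff)
  qed
  show "(fh N 1 i + fh N (N-1) i) * real i = (2 * (real N)^2) * (1 / (real N - real i)) + (if i = 1 then 0 else 0)"
    unfolding fh cc using Np ip d by (auto simp: field_simps)
  show "(fh N 1 i + fh N (N-1) i) * real (N - i) = (2 * (real N)^2) * (1 / real i) + (if i = 1 then 0 else 0)"
    unfolding fh cc Nm using Np ip d by (auto simp: field_simps)
qed

theorem theorem1:
  fixes N :: nat and delta theta :: real
  assumes "N \<ge> 2" and "delta < 0"
  shows "((\<lambda>beta. E_r N delta beta theta) \<longlongrightarrow>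
           (if theta < - delta then (real N)^2 * theta / 2 * (1 / (real N - 1) + harm N)
            else if theta = - delta then (real N)^2 * theta * harm N
            else (real N)^2 * theta / 2 * (1 + harm N))) at_top
       \<and> ((\<lambda>beta. E_p N delta beta theta) \<longlongrightarrow>
           (if theta < - delta then (real N)^2 * theta / 2 * (1 + harm N)
            else if theta = - delta then (real N)^2 * theta * harm N
            else (real N)^2 * theta / 2 * (harm N + 1 / (real N - 1)))) at_top"
proof -
  note N = assms(1)
  have k1: "1 \<in> {1..N-1}" and kN: "N - 1 \<in> {1..N-1}" using N by auto
  have hi: "(\<Sum>i=1..N-1. 1 / real i) = harm N" by (simp add: harm_def)
  have n1: "real N - 1 \<noteq> 0" using N by auto
  consider "theta < - delta" | "theta = - delta" | "theta > - delta" by linarith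
  then show ?thesis
  proof cases
    case 1
    have p: "((\<lambda>beta. 1 / (1 + exp (- (beta * (theta + delta))))) \<longlongrightarrow> 0) at_top"
      by (rule pf_lim_neg) (use 1 in simp)
    have F: "\<And>a b. a<N-1 \<Longrightarrow> b<N-1 \<Longrightarrow> ((\<lambda>beta. fund_mat N delta beta theta $$ (a,b)) \<longlongrightarrow> f0 N (a+1) (b+1)) at_top"
      by (rule fund_lim[OF p AB0[OF N]])
    have sr: "(\<Sum>i=1..N-1. (f0 N 1 i + f0 N (N-1) i) * real i) = (real N)^2 * harm N + (real N)^2 / (real N - 1)"
      using sum_helper[OF pt(3)[OF N] k1] harm_rev by simp
    have sp: "(\<Sum>i=1..N-1. (f0 N 1 i + f0 N (N-1) i) * real (N - i)) = (real N)^2 * harm N + (real N)^2"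
      using sum_helper[OF pt(4)[OF N] k1] hi by simp
    have v1: "theta / 2 * ((real N)^2 * harm N + (real N)^2 / (real N - 1)) = (real N)^2 * theta / 2 * (1 / (real N - 1) + harm N)"
      using n1 by (simp add: field_simps)
    have v2: "theta / 2 * ((real N)^2 * harm N + (real N)^2) = (real N)^2 * theta / 2 * (1 + harm N)"
      by (simp add: algebra_simps)
    show ?thesis using E_lims[OF N F] 1 unfolding sr sp v1 v2 by simp
  next
    case 2
    have p: "((\<lambda>beta. 1 / (1 + exp (- (beta * (theta + delta))))) \<longlongrightarrow> 1/2) at_top"
      using 2 by simp
    have F: "\<And>a b. a<N-1 \<Longrightarrow> b<N-1 \<Longrightarrow> ((\<lambda>beta. fund_mat N delta beta theta $$ (a,b)) \<longlongrightarrow> fh N (a+1) (b+1)) at_top"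
      by (rule fund_lim[OF p ABh[OF N]])
    have sr: "(\<Sum>i=1..N-1. (fh N 1 i + fh N (N-1) i) * real i) = 2 * (real N)^2 * harm N"
      using sum_helper[OF pt(5)[OF N] k1] harm_rev by simp
    have sp: "(\<Sum>i=1..N-1. (fh N 1 i + fh N (N-1) i) * real (N - i)) = 2 * (real N)^2 * harm N"
      using sum_helper[OF pt(6)[OF N] k1] hi by simp
    have v: "theta / 2 * (2 * (real N)^2 * harm N) = (real N)^2 * theta * harm N"
      by (simp add: algebra_simps)
    show ?thesis using E_lims[OF N F] 2 unfolding sr sp v by simp
  next
    case 3
    have p: "((\<lambda>beta. 1 / (1 + exp (- (beta * (theta + delta))))) \<longlongrightarrow> 1) at_top"
      by (rule pf_lim_pos) (use 3 in simp)
    have F: "\<And>a b. a<N-1 \<Longrightarrow> b<N-1 \<Longrightarrow> ((\<lambda>beta. fund_mat N delta beta theta $$ (a,b)) \<longlongrightarrow> f1 N (a+1) (b+1)) at_top"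
      by (rule fund_lim[OF p AB1[OF N]])
    have sr: "(\<Sum>i=1..N-1. (f1 N 1 i + f1 N (N-1) i) * real i) = (real N)^2 * harm N + (real N)^2"
      using sum_helper[OF pt(1)[OF N] kN] harm_rev by simp
    have sp: "(\<Sum>i=1..N-1. (f1 N 1 i + f1 N (N-1) i) * real (N - i)) = (real N)^2 * harm N + (real N)^2 / (real N - 1)"
      using sum_helper[OF pt(2)[OF N] kN] hi by simp
    have v1: "theta / 2 * ((real N)^2 * harm N + (real N)^2 / (real N - 1)) = (real N)^2 * theta / 2 * (harm N + 1 / (real N - 1))"
      using n1 by (simp add: field_simps)
    have v2: "theta / 2 * ((real N)^2 * harm N + (real N)^2) = (real N)^2 * theta / 2 * (1 + harm N)"
      by (simp add: algebra_simps)
    show ?thesis using E_lims[OF N F] 3 unfolding sr sp v1 v2 by simp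
  qed
qed

end
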